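(* Let $X$ be an affine Poisson variety over $\mathbf{k}$ with $\operatorname{HP}_0(\mathcal{O}(X))$ finite-dimensional, let $A_\hbar$ be a deformation quantization of $X$, and let $V\subseteq\mathcal{O}(X)$ be a finite-dimensional subspace such that the composition $V\hookrightarrow\mathcal{O}(X)\twoheadrightarrow\operatorname{HP}_0(\mathcal{O}(X))$ is an isomorphism. Then, inside $A_\hbar[\hbar^{-1}]$, $$A_\hbar\subseteq V[[\hbar]]+\hbar^{-1}\overline{[A_\hbar,A_\hbar]},$$ where $V[[\hbar]]=\{\sum_{m\ge0}v_m\hbar^m: v_m\in V\}\subseteq A_\hbar$ and $\overline{[A_\hbar,A_\hbar]}=\{\sum_{m\ge0}\hbar^mc_m: c_m\in[A_\hbar,A_\hbar]\}$ is the $\hbar$-adic closure of the span of commutators.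
   Context: A deformation quantization of $X$ is an associative $\mathbf{k}[[\hbar]]$-algebra $A_\hbar=(\mathcal{O}(X)[[\hbar]],\star)$ with $\star$ $\mathbf{k}[[\hbar]]$-bilinear, $a\star b\equiv ab\pmod\hbar$, and $a\star b-b\star a\equiv\hbar\{a,b\}\pmod{\hbar^2}$. $\operatorname{HP}_0(\mathcal{O}(X))=\mathcal{O}(X)/\{\mathcal{O}(X),\mathcal{O}(X)\}$. $\mathbf{k}$ is algebraically closed of characteristic zero. *)

theory Defs
  imports Main "HOL-Computational_Algebra.Formal_Power_Series"
    "HOL-Computational_Algebra.Polynomial" "HOL-Library.Function_Algebras"
begin

text \<open>The base field k: algebraically closed (characteristic zero is imposed by the
  type class field_char_0 in the theorem).\<close>
definition alg_closed_field :: "'k::field itself \<Rightarrow> bool" where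
  "alg_closed_field _ \<longleftrightarrow> (\<forall>p :: 'k poly. degree p > 0 \<longrightarrow> (\<exists>x. poly p x = 0))"

text \<open>O(X) is a commutative ring 'a with a k-algebra structure given by scale.\<close>
definition k_algebra :: "('k::field \<Rightarrow> 'a::comm_ring_1 \<Rightarrow> 'a) \<Rightarrow> bool" where
  "k_algebra scale \<longleftrightarrow> vector_space scale \<and>
     (\<forall>c a b. scale c (a * b) = scale c a * b)"

inductive_set alg_gen :: "('k::field \<Rightarrow> 'a::comm_ring_1 \<Rightarrow> 'a) \<Rightarrow> 'a set \<Rightarrow> 'a set"
  for scale G where
  gen: "x \<in> G \<Longrightarrow> x \<in> alg_gen scale G"
| one: "1 \<in> alg_gen scale G"
| add: "x \<in> alg_gen scale G \<Longrightarrow> y \<in> alg_gen scale G \<Longrightarrow> x + y \<in> alg_gen scale G"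
| mult: "x \<in> alg_gen scale G \<Longrightarrow> y \<in> alg_gen scale G \<Longrightarrow> x * y \<in> alg_gen scale G"
| smult: "x \<in> alg_gen scale G \<Longrightarrow> scale c x \<in> alg_gen scale G"

definition affine_variety_algebra :: "('k::field \<Rightarrow> 'a::comm_ring_1 \<Rightarrow> 'a) \<Rightarrow> bool" where
  "affine_variety_algebra scale \<longleftrightarrow> k_algebra scale \<and>
     (\<exists>G. finite G \<and> alg_gen scale G = UNIV) \<and>
     (\<forall>(a::'a) (n::nat). a ^ n = 0 \<longrightarrow> a = 0)"

definition poisson_bracket :: "('k::field \<Rightarrow> 'a::comm_ring_1 \<Rightarrow> 'a) \<Rightarrow> ('a \<Rightarrow> 'a \<Rightarrow> 'a) \<Rightarrow> bool" where
  "poisson_bracket scale br \<longleftrightarrow>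
     (\<forall>a b c. br (a + b) c = br a c + br b c) \<and>
     (\<forall>r a b. br (scale r a) b = scale r (br a b)) \<and>
     (\<forall>a b. br a b = - br b a) \<and>
     (\<forall>a b c. br a (br b c) + br b (br c a) + br c (br a b) = 0) \<and>
     (\<forall>a b c. br a (b * c) = br a b * c + b * br a c)"

definition poisson_brackets :: "('k::field \<Rightarrow> 'a::comm_ring_1 \<Rightarrow> 'a) \<Rightarrow> ('a \<Rightarrow> 'a \<Rightarrow> 'a) \<Rightarrow> 'a set" where
  "poisson_brackets scale br = module.span scale {br a b | a b. True}"

text \<open>HP_0 = O / {O,O} is finite-dimensional: finitely many elements span the quotient.\<close>
definition HP0_finite_dim :: "('k::field \<Rightarrow> 'a::comm_ring_1 \<Rightarrow> 'a) \<Rightarrow> ('a \<Rightarrow> 'a \<Rightarrow> 'a) \<Rightarrow> bool" where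
  "HP0_finite_dim scale br \<longleftrightarrow>
     (\<exists>B. finite B \<and> (\<forall>x. \<exists>v \<in> module.span scale B. x - v \<in> poisson_brackets scale br))"

text \<open>V is a finite-dimensional subspace with V -> O -> HP_0 an isomorphism
  (injective: V meets {O,O} only in 0; surjective: V + {O,O} = O).\<close>
definition HP0_section :: "('k::field \<Rightarrow> 'a::comm_ring_1 \<Rightarrow> 'a) \<Rightarrow> ('a \<Rightarrow> 'a \<Rightarrow> 'a) \<Rightarrow> 'a set \<Rightarrow> bool" where
  "HP0_section scale br V \<longleftrightarrow>
     module.subspace scale V \<and> (\<exists>B. finite B \<and> V = module.span scale B) \<and>
     V \<inter> poisson_brackets scale br = {0} \<and>
     (\<forall>x. \<exists>v \<in> V. x - v \<in> poisson_brackets scale br)"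

text \<open>Elements of O(X)[[h]] are coefficient sequences nat => 'a.
  Action of k[[h]] (as 'k fps) on O(X)[[h]].\<close>
definition fps_act :: "('k::field \<Rightarrow> 'a::comm_ring_1 \<Rightarrow> 'a) \<Rightarrow> 'k fps \<Rightarrow> (nat \<Rightarrow> 'a) \<Rightarrow> (nat \<Rightarrow> 'a)" where
  "fps_act scale c f = (\<lambda>n. \<Sum>i\<le>n. scale (fps_nth c i) (f (n - i)))"

text \<open>Deformation quantization: k[[h]]-bilinear associative product star on O(X)[[h]] with
  a*b = ab mod h and a*b - b*a = h{a,b} mod h^2.\<close>
definition deformation_quantization ::
  "('k::field \<Rightarrow> 'a::comm_ring_1 \<Rightarrow> 'a) \<Rightarrow> ('a \<Rightarrow> 'a \<Rightarrow> 'a) \<Rightarrow>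
   ((nat \<Rightarrow> 'a) \<Rightarrow> (nat \<Rightarrow> 'a) \<Rightarrow> (nat \<Rightarrow> 'a)) \<Rightarrow> bool" where
  "deformation_quantization scale br star \<longleftrightarrow>
     (\<forall>f g h. star (f + g) h = star f h + star g h) \<and>
     (\<forall>f g h. star f (g + h) = star f g + star f h) \<and>
     (\<forall>c f g. star (fps_act scale c f) g = fps_act scale c (star f g)) \<and>
     (\<forall>c f g. star f (fps_act scale c g) = fps_act scale c (star f g)) \<and>
     (\<forall>f g h. star (star f g) h = star f (star g h)) \<and>
     (\<forall>f g. star f g 0 = f 0 * g 0) \<and>
     (\<forall>f g. (star f g - star g f) 0 = 0 \<and> (star f g - star g f) 1 = br (f 0) (g 0))"

definition hbar_mult :: "(nat \<Rightarrow> 'a::zero) \<Rightarrow> (nat \<Rightarrow> 'a)" where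
  "hbar_mult f = (\<lambda>n. if n = 0 then 0 else f (n - 1))"

text \<open>The h-adically convergent sum  \<Sum>_m h^m c_m.\<close>
definition hsum :: "(nat \<Rightarrow> nat \<Rightarrow> 'a::comm_monoid_add) \<Rightarrow> (nat \<Rightarrow> 'a)" where
  "hsum c = (\<lambda>n. \<Sum>m\<le>n. c m (n - m))"

definition commutator_closure ::
  "('k::field \<Rightarrow> 'a::comm_ring_1 \<Rightarrow> 'a) \<Rightarrow> ((nat \<Rightarrow> 'a) \<Rightarrow> (nat \<Rightarrow> 'a) \<Rightarrow> (nat \<Rightarrow> 'a)) \<Rightarrow> (nat \<Rightarrow> 'a) set" where
  "commutator_closure scale star =
     {hsum c | c. \<forall>m. c m \<in> module.span (\<lambda>r f n. scale r (f n)) {star f g - star g f | f g. True}}"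

end

theory Submission
  imports Defs
begin

lemma seq_module:
  assumes "module scale"
  shows "module (\<lambda>r f n. scale r (f n))"
proof -
  interpret module scale by fact
  show ?thesis
    by unfold_locales (auto simp: fun_eq_iff scale_right_distrib scale_left_distrib)
qed

lemma key_lift:
  fixes scale :: "'k::field \<Rightarrow> 'a::comm_ring_1 \<Rightarrow> 'a"
  assumes vs: "vector_space scale"
    and dq: "deformation_quantization scale br star"
    and x: "x \<in> poisson_brackets scale br"
  shows "\<exists>C \<in> module.span (\<lambda>r f n. scale r (f n)) {star f g - star g f | f g. True}.
           C 0 = 0 \<and> C 1 = x"
proof -
  have m: "module scale" using vs by (simp add: module_iff_vector_space)
  interpret module scale by (rule m)
  interpret s: module "\<lambda>r f n. scale r (f n)" by (rule seq_module[OF m])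
  have comm: "\<forall>f g. (star f g - star g f) 0 = 0 \<and> (star f g - star g f) 1 = br (f 0) (g 0)"
    using dq unfolding deformation_quantization_def by blast
  from x have "x \<in> span {br a b | a b. True}" by (simp add: poisson_brackets_def)
  then show ?thesis
  proof (induction rule: span_induct_alt)
    case base
    show ?case by (rule bexI[of _ 0]) (auto intro: s.span_zero)
  next
    case (step c x y)
    from step(1) obtain a b where xab: "x = br a b" by blast
    from step(2) obtain Cy where Cy: "Cy \<in> s.span {star f g - star g f | f g. True}" "Cy 0 = 0" "Cy 1 = y" by blast
    define f :: "nat \<Rightarrow> 'a" where "f = (\<lambda>n. if n = 0 then a else 0)"
    define g :: "nat \<Rightarrow> 'a" where "g = (\<lambda>n. if n = 0 then b else 0)"
    define K where "K = star f g - star g f"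
    have K: "K 0 = 0" "K 1 = x" using comm xab by (auto simp: K_def f_def g_def)
    have Ks: "K \<in> s.span {star f g - star g f | f g. True}"
      by (rule s.span_base) (auto simp: K_def)
    let ?C = "(\<lambda>n. scale c (K n)) + Cy"
    have "?C \<in> s.span {star f g - star g f | f g. True}"
      by (rule s.span_add[OF s.span_scale[OF Ks] Cy(1)])
    moreover have "?C 0 = 0" "?C 1 = scale c x + y" using K Cy by auto
    ultimately show ?case by blast
  qed
qed

theorem mainTheorem4:
  fixes scale :: "'k::field_char_0 \<Rightarrow> 'a::comm_ring_1 \<Rightarrow> 'a"
    and br :: "'a \<Rightarrow> 'a \<Rightarrow> 'a"
    and star :: "(nat \<Rightarrow> 'a) \<Rightarrow> (nat \<Rightarrow> 'a) \<Rightarrow> (nat \<Rightarrow> 'a)"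
    and V :: "'a set"
  assumes "alg_closed_field TYPE('k)"
    and "affine_variety_algebra scale"
    and "poisson_bracket scale br"
    and "HP0_finite_dim scale br"
    and "deformation_quantization scale br star"
    and "HP0_section scale br V"
  shows "\<forall>a :: nat \<Rightarrow> 'a. \<exists>v. (\<forall>m. v m \<in> V) \<and>
           hbar_mult (a - v) \<in> commutator_closure scale star"
proof
  fix a :: "nat \<Rightarrow> 'a"
  let ?S = "module.span (\<lambda>r f n. scale r (f n)) {star f g - star g f | f g. True}"
  have vs: "vector_space scale" using assms(2)
    by (simp add: affine_variety_algebra_def k_algebra_def)
  have "\<forall>x. \<exists>v. v \<in> V \<and> x - v \<in> poisson_brackets scale br"
    using assms(6) unfolding HP0_section_def by blast
  from choice[OF this] obtain sel where sel0: "\<forall>x. sel x \<in> V \<and> x - sel x \<in> poisson_brackets scale br"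
    by blast
  have sel: "\<And>x. sel x \<in> V" "\<And>x. x - sel x \<in> poisson_brackets scale br"
    using sel0 by auto
  have "\<forall>x. \<exists>C. x \<in> poisson_brackets scale br \<longrightarrow> (C \<in> ?S \<and> C 0 = 0 \<and> C 1 = x)"
  proof
    fix x
    show "\<exists>C. x \<in> poisson_brackets scale br \<longrightarrow> (C \<in> ?S \<and> C 0 = 0 \<and> C 1 = x)"
    proof (cases "x \<in> poisson_brackets scale br")
      case True
      from key_lift[OF vs assms(5) True] obtain C where "C \<in> ?S" "C 0 = 0" "C 1 = x" by blast
      then show ?thesis by blast
    qed auto
  qed
  from choice[OF this] obtain lift where lift0: "\<forall>x. x \<in> poisson_brackets scale br \<longrightarrow>
      lift x \<in> ?S \<and> lift x 0 = 0 \<and> lift x 1 = x"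
    by blast
  have lift: "\<And>x. x \<in> poisson_brackets scale br \<Longrightarrow>
      lift x \<in> ?S \<and> lift x 0 = 0 \<and> lift x 1 = x" using lift0 by blast
  define r where "r = rec_nat a (\<lambda>k rk. (\<lambda>j. rk (Suc j) - lift (rk 0 - sel (rk 0)) (Suc (Suc j))))"
  have r0: "r 0 = a" by (simp add: r_def)
  define C where "C = (\<lambda>m. lift (r m 0 - sel (r m 0)))"
  have rS: "r (Suc k) j = r k (Suc j) - C k (Suc (Suc j))" for k j
    by (simp add: r_def C_def)
  have CS: "C m \<in> ?S" "C m 0 = 0" "C m 1 = r m 0 - sel (r m 0)" for m
    using lift[OF sel(2)] by (auto simp: C_def)
  have inv: "r 0 (k + j) = (\<Sum>m<k. C m (Suc (k + j - m))) + r k j" for k j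
  proof (induction k arbitrary: j)
    case 0 then show ?case by simp
  next
    case (Suc k)
    have "r 0 (Suc k + j) = r 0 (k + Suc j)" by simp
    also have "\<dots> = (\<Sum>m<k. C m (Suc (k + Suc j - m))) + r k (Suc j)" by (rule Suc.IH)
    also have "(\<Sum>m<k. C m (Suc (k + Suc j - m))) = (\<Sum>m<k. C m (Suc (Suc k + j - m)))"
      by (rule sum.cong) (auto simp: Suc_diff_le)
    also have "r k (Suc j) = C k (Suc (Suc j)) + r (Suc k) j" by (simp add: rS)
    finally show ?case by (simp add: Suc_diff_le algebra_simps)
  qed
  define v where "v = (\<lambda>m. sel (r m 0))"
  show "\<exists>v. (\<forall>m. v m \<in> V) \<and> hbar_mult (a - v) \<in> commutator_closure scale star"
  proof (intro exI conjI allI)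
    show "v m \<in> V" for m by (simp add: v_def sel)
    have "hbar_mult (a - v) = hsum C"
    proof
      fix n
      show "hbar_mult (a - v) n = hsum C n"
      proof (cases n)
        case 0 then show ?thesis by (simp add: hbar_mult_def hsum_def CS)
      next
        case (Suc N)
        have "hsum C n = (\<Sum>m\<le>N. C m (Suc N - m)) + C (Suc N) 0"
          by (simp add: hsum_def Suc)
        also have "\<dots> = (\<Sum>m<N. C m (Suc N - m)) + C N 1"
          by (simp add: CS lessThan_Suc_atMost[symmetric])
        also have "(\<Sum>m<N. C m (Suc N - m)) = (\<Sum>m<N. C m (Suc (N + 0 - m)))"
          by (rule sum.cong) (auto simp: Suc_diff_le)
        finally have h: "hsum C n = (\<Sum>m<N. C m (Suc (N + 0 - m))) + (r N 0 - sel (r N 0))"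
          using CS(3)[of N] by (simp add: One_nat_def)
        have "a N = (\<Sum>m<N. C m (Suc (N + 0 - m))) + r N 0" using inv[of N 0] r0 by simp
        then show ?thesis using h by (simp add: hbar_mult_def Suc v_def)
      qed
    qed
    then show "hbar_mult (a - v) \<in> commutator_closure scale star"
      unfolding commutator_closure_def using CS(1) by blast
  qed
qed

end
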